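(* Let ${\cal X}$ be a real Hilbert space, $0\le\tau_{\min}\le\tau_{\max}\le\infty$ and $\mathrm{proj}(t):=\min\{\max\{t,\tau_{\min}\},\tau_{\max}\}$ for $t\in\mathbb{R}$. Let $s,z\in{\cal X}$ with $s\ne0$, set $\rho:=z^Ts$, $$\lambda:=\frac{\|s\|^2+\|z\|^2-\sqrt{(\|s\|^2-\|z\|^2)^2+4\rho^2}}{2},$$ and $$\tau^s:=\mathrm{proj}\Big(\frac{\rho}{\|s\|^2}\Big),\quad\tau^g:=\mathrm{proj}\Big(\frac{\|z\|}{\|s\|}\Big),\quad\tau^z:=\mathrm{proj}\Big(\frac{\|z\|^2}{\rho}\Big),\quad\tau^u:=\mathrm{proj}\Big(\frac{\|z\|^2-\lambda}{\rho}\Big),$$ where $\tau^z$ and $\tau^u$ are defined only if $\rho\ne0$. If $\rho>0$, then $0\le\tau^s\le\tau^u\le\tau^z$ and $0\le\tau^s\le\tau^g\le\tau^z$. If $\rho\le0$, then $0\le\tau_{\min}=\tau^s\le\tau^g$.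
   Context: ${\cal X}$ is a real Hilbert space with inner product written $z^Ts$ and induced norm $\|\cdot\|$. *)

theory Defs
  imports "HOL-Analysis.Analysis" "HOL-Library.Extended_Real"
begin

text \<open>Projection onto [tau_min, tau_max]; tau_max may be infinite, hence an ereal.\<close>
definition proj :: "real \<Rightarrow> ereal \<Rightarrow> real \<Rightarrow> ereal" where
  "proj tmin tmax t = min (max (ereal t) (ereal tmin)) tmax"

end

theory Submission
  imports Defs
begin

lemma proj_mono: "x \<le> y \<Longrightarrow> proj tmin tmax x \<le> proj tmin tmax y"
  unfolding proj_def by (intro min.mono max.mono) auto

lemma proj_ge: "ereal tmin \<le> tmax \<Longrightarrow> ereal tmin \<le> proj tmin tmax x"
  unfolding proj_def by auto

lemma proj_low: "x \<le> tmin \<Longrightarrow> ereal tmin \<le> tmax \<Longrightarrow> proj tmin tmax x = ereal tmin"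
  unfolding proj_def by (auto simp: max_def min_def)

lemma key:
  fixes a b r D :: real
  assumes a: "a > 0" and b: "b \<ge> 0" and r: "r > 0" and rab: "r^2 \<le> a*b"
    and D: "D = sqrt ((a - b)^2 + 4*r^2)"
  shows "r / a \<le> (b - (a + b - D)/2) / r" and "(b - (a + b - D)/2) / r \<le> b / r"
proof -
  have D0: "D \<ge> 0" using D by simp
  have DD: "D^2 = (a - b)^2 + 4*r^2" using D by simp
  have "D \<le> a + b"
  proof -
    have "(a+b)^2 = (a-b)^2 + 4*(a*b)" by (simp add: power2_eq_square algebra_simps)
    hence "D^2 \<le> (a+b)^2" using DD rab by linarith
    thus ?thesis by (rule power2_le_imp_le) (use a b in linarith)
  qed
  then have "0 \<le> (a + b - D)/2" by simp
  then have "b - (a + b - D)/2 \<le> b" by linarith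
  then show "(b - (a + b - D)/2) / r \<le> b / r" using r by (simp add: divide_right_mono)
  define q where "q = r^2 / a"
  have aq: "a * q = r^2" unfolding q_def using a by simp
  have q0: "q \<ge> 0" unfolding q_def using a by simp
  have qb: "q \<le> b" unfolding q_def using a rab by (simp add: pos_divide_le_eq mult.commute)
  have "a - b + 2*q \<le> D"
  proof (cases "a - b + 2*q \<le> 0")
    case True thus ?thesis using D0 by linarith
  next
    case False
    have e: "(a - b + 2*q)^2 = (a-b)^2 + 4*(q*(a - b + q))"
      by (simp add: power2_eq_square algebra_simps)
    have "a - b + q \<le> a" using qb by linarith
    hence "q*(a - b + q) \<le> q*a" using q0 by (rule mult_left_mono)
    hence "(a - b + 2*q)^2 \<le> D^2" using e DD aq by (simp add: mult.commute)
    thus ?thesis using D0 by (rule power2_le_imp_le)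
  qed
  hence "a*(a - b + 2*q) \<le> a*D" using a by (simp add: mult_left_mono)
  hence "a*a - a*b + 2*r^2 \<le> a*D" using aq by (simp add: algebra_simps)
  moreover have "(b - (a + b - D)/2) * a = (a*b - a*a + a*D)/2" by (simp add: field_simps)
  moreover have "r^2 = r * r" by (simp add: power2_eq_square)
  ultimately have "r * r \<le> (b - (a + b - D)/2) * a" by (simp add: mult.commute)
  hence "r / a * r \<le> (b - (a + b - D)/2)" using a by (simp add: pos_divide_le_eq mult.commute)
  thus "r / a \<le> (b - (a + b - D)/2) / r" using r by (simp add: pos_le_divide_eq)
qed

lemma key2:
  fixes a b r :: real
  assumes a: "a > 0" and b: "b \<ge> 0" and r: "r > 0" and rab: "r \<le> a*b"
  shows "r / a^2 \<le> b / a" and "b / a \<le> b^2 / r"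
proof -
  have "r / a \<le> b" using a rab by (simp add: pos_divide_le_eq mult.commute)
  hence "r / a / a \<le> b / a" by (rule divide_right_mono) (use a in simp)
  moreover have "r / a^2 = r / a / a" by (simp add: power2_eq_square)
  ultimately show "r / a^2 \<le> b / a" by (simp only:)
  have "b * r \<le> b * (a * b)" using rab b by (rule mult_left_mono)
  hence "b * r \<le> b^2 * a" by (simp add: power2_eq_square algebra_simps)
  hence "b / a * r \<le> b^2" using a by (simp add: pos_divide_le_eq)
  thus "b / a \<le> b^2 / r" using r by (simp add: pos_le_divide_eq)
qed

theorem lemma3p2:
  fixes s z :: "'a::{real_inner, complete_space}"
    and tmin :: real and tmax :: ereal
  assumes "0 \<le> tmin" and "ereal tmin \<le> tmax" and "s \<noteq> 0"
  defines "\<rho> \<equiv> z \<bullet> s"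
  defines "lam \<equiv> ((norm s)\<^sup>2 + (norm z)\<^sup>2
                 - sqrt (((norm s)\<^sup>2 - (norm z)\<^sup>2)\<^sup>2 + 4 * \<rho>\<^sup>2)) / 2"
  defines "\<tau>s \<equiv> proj tmin tmax (\<rho> / (norm s)\<^sup>2)"
  defines "\<tau>g \<equiv> proj tmin tmax (norm z / norm s)"
  defines "\<tau>z \<equiv> proj tmin tmax ((norm z)\<^sup>2 / \<rho>)"
  defines "\<tau>u \<equiv> proj tmin tmax (((norm z)\<^sup>2 - lam) / \<rho>)"
  shows "(\<rho> > 0 \<longrightarrow> 0 \<le> \<tau>s \<and> \<tau>s \<le> \<tau>u \<and> \<tau>u \<le> \<tau>z
                    \<and> \<tau>s \<le> \<tau>g \<and> \<tau>g \<le> \<tau>z)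
       \<and> (\<rho> \<le> 0 \<longrightarrow> 0 \<le> ereal tmin \<and> ereal tmin = \<tau>s \<and> \<tau>s \<le> \<tau>g)"
proof -
  have ns: "norm s > 0" using assms(3) by simp
  have cs: "\<rho> \<le> norm s * norm z" unfolding \<rho>_def
    using abs_le_D1[OF Cauchy_Schwarz_ineq2[of z s]] mult.commute[of "norm z" "norm s"] by linarith
  have s0: "0 \<le> \<tau>s" unfolding \<tau>s_def
    using proj_ge[OF assms(2), of "\<rho> / (norm s)\<^sup>2"] assms(1)
    by (metis order_trans ereal_less_eq(3) zero_ereal_def)
  have pos: "\<rho> > 0 \<longrightarrow> 0 \<le> \<tau>s \<and> \<tau>s \<le> \<tau>u \<and> \<tau>u \<le> \<tau>z \<and> \<tau>s \<le> \<tau>g \<and> \<tau>g \<le> \<tau>z"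
  proof
    assume r: "\<rho> > 0"
    have rab: "\<rho>^2 \<le> (norm s)^2 * (norm z)^2"
      proof -
      have "\<rho>^2 \<le> (norm s * norm z)^2" using cs r by (intro power_mono) auto
      thus ?thesis by (simp only: power_mult_distrib)
    qed
    have a0: "(norm s)^2 > 0" using ns by simp
    have b0: "(norm z)^2 \<ge> 0" by simp
    have lamq: "lam = ((norm s)^2 + (norm z)^2 - sqrt (((norm s)^2 - (norm z)^2)^2 + 4 * \<rho>^2)) / 2"
      unfolding lam_def by (rule refl)
    have rab': "\<rho>^2 \<le> (norm s)^2 * (norm z)^2" by (rule rab)
    have k1: "\<rho> / (norm s)^2 \<le> ((norm z)^2 - lam) / \<rho>"
      unfolding lamq by (rule key(1)[OF a0 b0 r rab' refl])
    have k2: "((norm z)^2 - lam) / \<rho> \<le> (norm z)^2 / \<rho>"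
      unfolding lamq by (rule key(2)[OF a0 b0 r rab' refl])
    have k3: "\<rho> / (norm s)^2 \<le> norm z / norm s"
      by (rule key2(1)[OF ns norm_ge_zero[of z] r cs])
    have k4: "norm z / norm s \<le> (norm z)^2 / \<rho>"
      by (rule key2(2)[OF ns norm_ge_zero[of z] r cs])
    show "0 \<le> \<tau>s \<and> \<tau>s \<le> \<tau>u \<and> \<tau>u \<le> \<tau>z \<and> \<tau>s \<le> \<tau>g \<and> \<tau>g \<le> \<tau>z"
      using s0 proj_mono[OF k1] proj_mono[OF k2] proj_mono[OF k3] proj_mono[OF k4]
      unfolding \<tau>s_def \<tau>u_def \<tau>z_def \<tau>g_def by blast
  qed
  have neg: "\<rho> \<le> 0 \<longrightarrow> 0 \<le> ereal tmin \<and> ereal tmin = \<tau>s \<and> \<tau>s \<le> \<tau>g"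
  proof
    assume r: "\<rho> \<le> 0"
    have a: "\<rho> / (norm s)^2 \<le> tmin" using divide_nonpos_pos[OF r, of "(norm s)^2"] ns assms(1) by simp
    have b: "\<rho> / (norm s)^2 \<le> norm z / norm s" using divide_nonpos_pos[OF r zero_less_power[OF ns, of 2]]
        divide_nonneg_pos[OF norm_ge_zero[of z] ns] by linarith
    show "0 \<le> ereal tmin \<and> ereal tmin = \<tau>s \<and> \<tau>s \<le> \<tau>g"
      using assms(1) proj_low[OF a assms(2)] proj_mono[OF b, of tmin tmax]
      unfolding \<tau>s_def \<tau>g_def by auto
  qed
  show ?thesis using pos neg by blast
qed

end
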